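(* Let $p,q,r$ be pairwise distinct primes with $p<q$ and $p<r$. Then for every integer $n$, $$|a_{pqr}(n)-a_{pqr}(n-1)|\le 1.$$
   Context: $\Phi_{pqr}(x)=\prod_{0<k<pqr,\ \gcd(k,pqr)=1}(x-\zeta^k)$, where $\zeta$ is a primitive $pqr$-th root of unity, is the ternary cyclotomic polynomial; $a_{pqr}(n)$ denotes its coefficient of $x^n$ (zero for $n$ outside $[0,\deg\Phi_{pqr}]$). *)

theory Defs
  imports Complex_Main "HOL-Computational_Algebra.Polynomial"
begin

definition cyclotomic_poly :: "nat \<Rightarrow> complex poly" where
  "cyclotomic_poly m =
     (\<Prod>k\<in>{k. 0 < k \<and> k < m \<and> coprime k m}.
        [: - ((cis (2 * pi / real m)) ^ k), 1 :])"

text \<open>a_m(n): coefficient of x^n in the m-th cyclotomic polynomial, for integer n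
  (zero for negative n; coeff is already zero above the degree).\<close>
definition cyc_coeff :: "nat \<Rightarrow> int \<Rightarrow> complex" where
  "cyc_coeff m n = (if n < 0 then 0 else coeff (cyclotomic_poly m) (nat n))"

end

theory Submission
  imports Defs "HOL-Computational_Algebra.Primes"
begin

definition zeta :: "nat \<Rightarrow> complex" where "zeta m = cis (2 * pi / real m)"
definition Phi :: "nat \<Rightarrow> complex poly" where
  "Phi d = (\<Prod>j\<in>{j. j < d \<and> coprime j d}. [:- (zeta d ^ j), 1:])"
definition PP :: "nat \<Rightarrow> complex poly" where "PP m = monom 1 m - 1"

lemma zeta_pow: "zeta m ^ k = cis (2 * pi * real k / real m)"
  by (simp add: zeta_def DeMoivre mult_ac)

lemma prod_roots_dvd:
  fixes p :: "complex poly"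
  assumes "finite S" "p \<noteq> 0" "\<forall>z\<in>S. poly p z = 0"
  shows "(\<Prod>z\<in>S. [:-z, 1:]) dvd p"
  using assms
proof (induction S arbitrary: p rule: finite_induct)
  case empty
  then show ?case by simp
next
  case (insert z S)
  have "[:-z, 1:] dvd p" using insert.prems by (simp add: poly_eq_0_iff_dvd)
  then obtain q0 where q0: "p = [:-z, 1:] * q0" by (elim dvdE)
  have "q0 \<noteq> 0" using insert.prems q0 by auto
  moreover have "\<forall>w\<in>S. poly q0 w = 0"
  proof
    fix w assume "w \<in> S"
    then have "w \<noteq> z" "poly p w = 0" using insert by auto
    then show "poly q0 w = 0" using q0 by simp
  qed
  ultimately have "(\<Prod>z\<in>S. [:-z, 1:]) dvd q0" using insert.IH by blast
  then show ?case unfolding prod.insert[OF insert.hyps] q0 by (rule mult_dvd_mono[OF dvd_refl])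
qed

lemma monic_dvd_eq:
  fixes p q :: "complex poly"
  assumes "p dvd q" "degree p = degree q" "lead_coeff p = 1" "lead_coeff q = 1"
  shows "p = q"
proof -
  obtain k where k: "q = p * k" using assms(1) by (elim dvdE)
  have "q \<noteq> 0" using assms(4) by auto
  then have "k \<noteq> 0" "p \<noteq> 0" using k by auto
  then have "degree q = degree p + degree k" using k degree_mult_eq by blast
  then have "degree k = 0" using assms(2) by simp
  then obtain c where c: "k = [:c:]" by (metis degree_eq_zeroE)
  have "lead_coeff q = lead_coeff p * lead_coeff k" using k by (simp add: lead_coeff_mult)
  then have "c = 1" using assms c by simp
  then show ?thesis using k c by simp
qed

lemma roots_prod:
  assumes "m > 0"
  shows "(\<Prod>k<m. [:- (zeta m ^ k), 1:]) = PP m"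
proof -
  let ?S = "{z::complex. z ^ m = 1}"
  have bij: "bij_betw (\<lambda>k. cis (2 * pi * real k / real m)) {..<m} ?S"
    using bij_betw_roots_unity[OF assms] .
  have fin: "finite ?S" using finite_roots_unity assms by auto
  have "(\<Prod>k<m. [:- (zeta m ^ k), 1:]) = (\<Prod>k<m. [:- (cis (2 * pi * real k / real m)), 1:])"
    by (simp add: zeta_pow)
  also have "\<dots> = (\<Prod>z\<in>?S. [:-z, 1:])"
    using prod.reindex_bij_betw[OF bij, of "\<lambda>z. [:-z, 1:]"] by simp
  finally have eq: "(\<Prod>k<m. [:- (zeta m ^ k), 1:]) = (\<Prod>z\<in>?S. [:-z, 1:])" .
  have cm: "coeff (PP m) m = 1" using assms by (simp add: PP_def)
  have PPne: "PP m \<noteq> 0" using cm by auto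
  have PProot: "\<forall>z\<in>?S. poly (PP m) z = 0" by (simp add: PP_def poly_monom)
  have "degree (PP m) \<le> m" unfolding PP_def
    by (intro degree_diff_le degree_monom_le) simp
  moreover have "m \<le> degree (PP m)" using cm by (simp add: le_degree)
  ultimately have degPP: "degree (PP m) = m" by simp
  have lcPP: "lead_coeff (PP m) = 1" using degPP cm by simp
  have dvd: "(\<Prod>z\<in>?S. [:-z, 1:]) dvd PP m" using prod_roots_dvd[OF fin PPne PProot] .
  have deg: "degree (\<Prod>z\<in>?S. [:-z, (1::complex):]) = m"
    using degree_prod_eq_sum_degree[of ?S "\<lambda>z. [:-z, (1::complex):]"] card_roots_unity_eq[OF assms]
    by simp
  have lc: "lead_coeff (\<Prod>z\<in>?S. [:-z, (1::complex):]) = 1"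
    by (simp add: lead_coeff_prod)
  show ?thesis using eq monic_dvd_eq[OF dvd] deg degPP lc lcPP by simp
qed

lemma zeta_eq:
  assumes "g > 0" "c > 0"
  shows "zeta (g * c) ^ (g * a) = zeta c ^ a"
proof -
  have "2 * pi * real (g * a) / real (g * c) = 2 * pi * real a / real c"
    using assms by (simp add: field_simps)
  then show ?thesis by (simp add: zeta_pow)
qed

lemma divisor_prod:
  assumes "m > 0"
  shows "(\<Prod>d\<in>{d. d dvd m}. Phi d) = PP m"
proof -
  let ?J = "\<lambda>d. {j. j < d \<and> coprime j d}"
  let ?T = "Sigma {d. d dvd m} ?J"
  have fin: "finite {d. d dvd m}" using assms by (simp add: finite_divisors_nat)
  have "(\<Prod>d\<in>{d. d dvd m}. Phi d) = (\<Prod>d\<in>{d. d dvd m}. \<Prod>j\<in>?J d. [:- (zeta d ^ j), 1:])"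
    by (simp add: Phi_def)
  also have "\<dots> = (\<Prod>(d,j)\<in>?T. [:- (zeta d ^ j), 1:])"
    using fin by (subst prod.Sigma) auto
  also have "\<dots> = (\<Prod>k<m. [:- (zeta m ^ k), 1:])"
  proof (rule sym[OF prod.reindex_bij_witness[where j = "\<lambda>k. (m div gcd k m, k div gcd k m)"
        and i = "\<lambda>(d,l). l * (m div d)"]])
    fix k assume k: "k \<in> {..<m}"
    define g where "g = gcd k m"
    have gpos: "g > 0" using assms g_def by simp
    obtain a where a: "k = g * a" using g_def by (metis gcd_dvd1 dvdE)
    obtain c where c: "m = g * c" using g_def by (metis gcd_dvd2 dvdE)
    have cpos: "c > 0" using assms c by simp
    have mdg: "m div g = c" "k div g = a" using a c gpos by auto
    have mdc: "m div c = g" using c cpos by simp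
    have ac: "a < c" using k a c gpos by auto
    have cop: "coprime a c"
    proof -
      have "coprime (k div g) (m div g)" unfolding g_def using assms by (intro div_gcd_coprime) auto
      then show ?thesis using mdg by simp
    qed
    have mdg': "m div gcd k m = c" "k div gcd k m = a" using mdg g_def by auto
    show "(case (m div gcd k m, k div gcd k m) of (d, l) \<Rightarrow> l * (m div d)) = k"
      unfolding mdg' using mdc a by (simp add: mult.commute)
    show "(m div gcd k m, k div gcd k m) \<in> ?T"
      unfolding mdg' using ac cop c by auto
    show "(case (m div gcd k m, k div gcd k m) of (d, j) \<Rightarrow> [:- (zeta d ^ j), 1:]) = [:- (zeta m ^ k), 1:]"
      unfolding mdg' using a c zeta_eq[OF gpos cpos, of a] by simp
  next
    fix b assume b: "b \<in> ?T"
    obtain d l where dl: "b = (d, l)" by (cases b)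
    have d: "d dvd m" "l < d" "coprime l d" using b dl by auto
    obtain c where c: "m = d * c" using d(1) by (elim dvdE)
    have cpos: "c > 0" "d > 0" using assms c by auto
    have mdd: "m div d = c" using c cpos by simp
    have gcdv: "gcd (l * c) m = c"
      using d(3) c by (simp add: gcd_mult_distrib_nat[symmetric] mult.commute)
    show "(m div gcd (case b of (d, l) \<Rightarrow> l * (m div d)) m,
           (case b of (d, l) \<Rightarrow> l * (m div d)) div gcd (case b of (d, l) \<Rightarrow> l * (m div d)) m) = b"
      using dl mdd gcdv c cpos by simp
    show "(case b of (d, l) \<Rightarrow> l * (m div d)) \<in> {..<m}"
      using dl mdd c d(2) cpos by simp
  qed
  also have "\<dots> = PP m" using roots_prod[OF assms] .
  finally show ?thesis .
qed

lemma Phi_eq: "m > 1 \<Longrightarrow> cyclotomic_poly m = Phi m"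
proof -
  assume m: "m > 1"
  have "{k. 0 < k \<and> k < m \<and> coprime k m} = {j. j < m \<and> coprime j m}"
    using m by (auto intro!: Nat.gr0I)
  then show ?thesis unfolding cyclotomic_poly_def Phi_def zeta_def by simp
qed

lemma prod_divisors_prime_mult:
  fixes f :: "nat \<Rightarrow> 'a::comm_monoid_mult"
  assumes p: "prime p" and nd: "\<not> p dvd m" and m: "m > 0"
  shows "(\<Prod>d\<in>{d. d dvd p * m}. f d) = (\<Prod>d\<in>{d. d dvd m}. f d) * (\<Prod>d\<in>{d. d dvd m}. f (p * d))"
proof -
  have p0: "p > 0" using p prime_gt_0_nat by blast
  have seteq: "{d. d dvd p * m} = {d. d dvd m} \<union> (\<lambda>d. p * d) ` {d. d dvd m}"
  proof (intro set_eqI iffI)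
    fix d assume "d \<in> {d. d dvd p * m}"
    then have d: "d dvd p * m" by simp
    show "d \<in> {d. d dvd m} \<union> (\<lambda>d. p * d) ` {d. d dvd m}"
    proof (cases "p dvd d")
      case True
      then obtain e where e: "d = p * e" by (elim dvdE)
      then have "e dvd m" using d p0 by simp
      then show ?thesis using e by auto
    next
      case False
      then have "coprime p d" using p by (simp add: prime_imp_coprime)
      then have "coprime d p" by (simp add: coprime_commute)
      then have "d dvd m" using d by (simp add: coprime_dvd_mult_right_iff)
      then show ?thesis by auto
    qed
  next
    fix d assume "d \<in> {d. d dvd m} \<union> (\<lambda>d. p * d) ` {d. d dvd m}"
    then show "d \<in> {d. d dvd p * m}" by auto
  qed
  have disj: "{d. d dvd m} \<inter> (\<lambda>d. p * d) ` {d. d dvd m} = {}"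
  proof (rule ccontr)
    assume "{d. d dvd m} \<inter> (\<lambda>d. p * d) ` {d. d dvd m} \<noteq> {}"
    then obtain e where "p * e dvd m" by auto
    then have "p dvd m" using dvd_mult_left by blast
    then show False using nd by simp
  qed
  have fin: "finite {d. d dvd m}" using m by (simp add: finite_divisors_nat)
  have inj: "inj_on (\<lambda>d. p * d) {d. d dvd m}" using p0 by (auto simp: inj_on_def)
  show ?thesis unfolding seteq using fin disj
    by (simp add: prod.union_disjoint prod.reindex[OF inj])
qed

lemma divisors_prime: "prime (p::nat) \<Longrightarrow> {d. d dvd p} = {1, p}"
  by (auto simp: prime_nat_iff)

lemma prod_divisors_prime:
  fixes g :: "nat \<Rightarrow> 'a::comm_monoid_mult"
  assumes "prime p" shows "(\<Prod>d\<in>{d. d dvd p}. g d) = g 1 * g p"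
proof -
  have "p \<noteq> 1" using assms by auto
  then show ?thesis using divisors_prime[OF assms] by simp
qed

lemma PP_prime_mult:
  assumes "prime p" "\<not> p dvd m" "m > 0"
  shows "PP (p * m) = PP m * (\<Prod>d\<in>{d. d dvd m}. Phi (p * d))"
proof -
  have "p * m > 0" using assms prime_gt_0_nat by simp
  then have "PP (p * m) = (\<Prod>d\<in>{d. d dvd p * m}. Phi d)" using divisor_prod by simp
  also have "\<dots> = PP m * (\<Prod>d\<in>{d. d dvd m}. Phi (p * d))"
    using prod_divisors_prime_mult[OF assms, of Phi] divisor_prod[OF assms(3)] by simp
  finally show ?thesis .
qed

lemma main_ident:
  assumes p: "prime p" and q: "prime q" and r: "prime r"
    and pq: "p \<noteq> q" and pr: "p \<noteq> r" and qr: "q \<noteq> r"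
  shows "PP (p*q*r) * PP p * PP q * PP r = Phi (p*q*r) * PP 1 * PP (p*q) * PP (p*r) * PP (q*r)"
proof -
  have npq: "\<not> p dvd q" using p q pq using primes_dvd_imp_eq by blast
  have npr: "\<not> p dvd r" using p r pr using primes_dvd_imp_eq by blast
  have nqr: "\<not> q dvd r" using q r qr using primes_dvd_imp_eq by blast
  have np1: "\<not> p dvd 1" using prime_gt_1_nat[OF p] by auto
  have npqr: "\<not> p dvd q * r" using npq npr p by (simp add: prime_dvd_mult_iff)
  have q0: "q > 0" "r > 0" using q r prime_gt_0_nat by auto
  have e1: "PP p = PP 1 * Phi p"
    using PP_prime_mult[OF p np1] by simp
  have e2: "PP (p*q) = PP q * (Phi p * Phi (p*q))"
    using PP_prime_mult[OF p npq] q0 prod_divisors_prime[OF q, of "\<lambda>d. Phi (p*d)"] by simp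
  have e3: "PP (p*r) = PP r * (Phi p * Phi (p*r))"
    using PP_prime_mult[OF p npr] q0 prod_divisors_prime[OF r, of "\<lambda>d. Phi (p*d)"] by simp
  have dqr: "(\<Prod>d\<in>{d. d dvd q * r}. Phi (p * d)) = (Phi p * Phi (p*r)) * (Phi (p*q) * Phi (p*(q*r)))"
    using prod_divisors_prime_mult[OF q nqr, of "\<lambda>d. Phi (p*d)"] q0
      prod_divisors_prime[OF r, of "\<lambda>d. Phi (p*d)"] prod_divisors_prime[OF r, of "\<lambda>d. Phi (p*(q*d))"]
    by (simp add: mult.assoc)
  have e4: "PP (p*q*r) = PP (q*r) * ((Phi p * Phi (p*r)) * (Phi (p*q) * Phi (p*q*r)))"
    using PP_prime_mult[OF p npqr] q0 dqr by (simp add: mult.assoc)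
  show ?thesis unfolding e1 e2 e3 e4 by (simp add: ac_simps)
qed


definition GS :: "nat \<Rightarrow> nat \<Rightarrow> complex poly" where "GS a k = (\<Sum>i<k. monom 1 (a*i))"

lemma geo: "PP a * GS a k = PP (a*k)"
proof (induction k)
  case 0
  then show ?case by (simp add: GS_def PP_def)
next
  case (Suc k)
  have "PP a * GS a (Suc k) = PP a * GS a k + PP a * monom 1 (a*k)"
    by (simp add: GS_def algebra_simps)
  also have "\<dots> = PP (a*k) + (monom 1 (a + a*k) - monom 1 (a*k))"
    using Suc by (simp add: PP_def algebra_simps mult_monom)
  also have "\<dots> = PP (a * Suc k)" by (simp add: PP_def)
  finally show ?case .
qed

lemma PP_ne: "m > 0 \<Longrightarrow> PP m \<noteq> 0"
proof
  assume "m > 0" "PP m = 0"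
  then have "coeff (PP m) m = 0" by simp
  moreover have "coeff (PP m) m = 1" using \<open>m > 0\<close> by (simp add: PP_def)
  ultimately show False by simp
qed

lemma key_poly:
  assumes p: "prime p" and q: "prime q" and r: "prime r"
    and pq: "p \<noteq> q" and pr: "p \<noteq> r" and qr: "q \<noteq> r"
  shows "(PP 1 * Phi (p*q*r)) * PP (p*q*r) * PP (p*q*r)
       = PP p * PP q * PP r * (GS (p*r) q * GS (q*r) p * GS (p*q) r)"
proof -
  let ?N = "p*q*r"
  let ?E = "PP 1 * Phi ?N"
  have N0: "?N > 0" using p q r prime_gt_0_nat by simp
  have g1: "PP (p*r) * GS (p*r) q = PP ?N" using geo[of "p*r" q] by (simp add: ac_simps)
  have g2: "PP (q*r) * GS (q*r) p = PP ?N" using geo[of "q*r" p] by (simp add: ac_simps)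
  have g3: "PP (p*q) * GS (p*q) r = PP ?N" using geo[of "p*q" r] by (simp add: ac_simps)
  have mi: "PP ?N * PP p * PP q * PP r = Phi ?N * PP 1 * PP (p*q) * PP (p*r) * PP (q*r)"
    using main_ident[OF assms] .
  have "PP ?N * (?E * PP ?N * PP ?N) = ?E * (PP (p*r) * GS (p*r) q) * (PP (q*r) * GS (q*r) p) * (PP (p*q) * GS (p*q) r)"
    unfolding g1 g2 g3 by (simp add: ac_simps)
  also have "\<dots> = (Phi ?N * PP 1 * PP (p*q) * PP (p*r) * PP (q*r)) * (GS (p*r) q * GS (q*r) p * GS (p*q) r)"
    by (simp add: ac_simps)
  also have "\<dots> = PP ?N * (PP p * PP q * PP r * (GS (p*r) q * GS (q*r) p * GS (p*q) r))"
    unfolding mi[symmetric] by (simp add: ac_simps)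
  finally show ?thesis using PP_ne[OF N0] by simp
qed

lemma coeff_trunc:
  assumes "n < N"
  shows "coeff (E * PP N * PP N) n = coeff (E :: complex poly) n"
proof -
  have "E * PP N * PP N = E + monom 1 N * (E * (monom 1 N - 2))"
    by (simp add: PP_def algebra_simps)
  then show ?thesis using assms by (simp add: coeff_monom_mult)
qed

lemma PPP_expand: "PP p * PP q * PP r = monom 1 (p+q+r) - monom 1 (p+q) - monom 1 (p+r) - monom 1 (q+r)
   + monom 1 p + monom 1 q + monom 1 r - 1"
  by (simp add: PP_def algebra_simps mult_monom)

lemma GS3_coeff:
  "coeff (GS A q * GS B p * GS C r) m =
     (\<Sum>k<r. \<Sum>j<p. \<Sum>i<q. if A*i + B*j + C*k = m then 1 else 0)"
proof -
  have "GS A q * GS B p * GS C r = (\<Sum>k<r. \<Sum>j<p. \<Sum>i<q. monom 1 (A*i + B*j + C*k))"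
    by (simp add: GS_def sum_distrib_left sum_distrib_right mult_monom)
  then show ?thesis by (simp add: coeff_sum coeff_monom)
qed


lemma fin:
  fixes t k1 k2 k3 l1 l2 l3 m1 m2 m3 :: int
  assumes "0 \<le> k1" "k1 \<le> 1" "0 \<le> k2" "k2 \<le> 1" "k1 \<le> k3" "k2 \<le> k3" "k3 \<le> 1 + k1" "k3 \<le> 1 + k2"
    "0 \<le> l1" "l1 \<le> 1" "0 \<le> l2" "l2 \<le> 1" "l1 \<le> l3" "l2 \<le> l3" "l3 \<le> 1 + l1" "l3 \<le> 1 + l2"
    "0 \<le> m1" "m1 \<le> 1" "0 \<le> m2" "m2 \<le> 1" "m1 \<le> m3" "m2 \<le> m3" "m3 \<le> 1 + m1" "m3 \<le> 1 + m2"
    "0 \<le> t" "0 \<le> t - 1 + k1 + m1" "0 \<le> t - 1 + l1 + m2" "0 \<le> t - 1 + k2 + l2"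
    "0 \<le> t - 2 + k1 + l1 + m3" "0 \<le> t - 2 + k3 + l2 + m1" "0 \<le> t - 2 + k2 + l3 + m2"
    "0 \<le> t - 3 + k3 + l3 + m3"
  shows "\<bar>(if t = 0 then 1 else 0) - (if t - 1 + k1 + m1 = 0 then 1 else 0)
     - (if t - 1 + l1 + m2 = 0 then 1 else 0) - (if t - 1 + k2 + l2 = 0 then 1 else 0)
     + (if t - 2 + k1 + l1 + m3 = 0 then 1 else 0) + (if t - 2 + k3 + l2 + m1 = 0 then 1 else 0)
     + (if t - 2 + k2 + l3 + m2 = 0 then 1 else 0) - (if t - 3 + k3 + l3 + m3 = 0 then 1 else 0)\<bar> \<le> (1::int)"
proof -
  have "k1 = 0 \<or> k1 = 1" "k2 = 0 \<or> k2 = 1" "l1 = 0 \<or> l1 = 1" "l2 = 0 \<or> l2 = 1" "m1 = 0 \<or> m1 = 1" "m2 = 0 \<or> m2 = 1"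
     "k3 = 0 \<or> k3 = 1 \<or> k3 = 2" "l3 = 0 \<or> l3 = 1 \<or> l3 = 2" "m3 = 0 \<or> m3 = 1 \<or> m3 = 2"
    using assms by auto
  then show ?thesis using assms by (elim disjE) (simp_all, linarith?)
qed

lemma modk:
  fixes x N k :: int
  assumes "0 \<le> x + N*k" "x + N*k < N"
  shows "x mod N = x + N*k"
proof -
  have "(x + N*k) mod N = x mod N" by (simp add: mult.commute)
  moreover have "(x + N*k) mod N = x + N*k" by (rule mod_pos_pos_trivial) (use assms in auto)
  ultimately show ?thesis by simp
qed

lemma wrap:
  fixes X u v N :: int
  assumes "0 \<le> X" "X < N" "0 \<le> u" "u < N" "0 \<le> v" "v < N"
  shows "\<exists>k1 k2 k3. (X-u) mod N = X-u+N*k1 \<and> (X-v) mod N = X-v+N*k2 \<and> (X-u-v) mod N = X-u-v+N*k3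
    \<and> 0 \<le> k1 \<and> k1 \<le> 1 \<and> 0 \<le> k2 \<and> k2 \<le> 1 \<and> k1 \<le> k3 \<and> k2 \<le> k3 \<and> k3 \<le> 1 + k1 \<and> k3 \<le> 1 + k2"
proof -
  define k1 :: int where "k1 = (if X < u then 1 else 0)"
  define k2 :: int where "k2 = (if X < v then 1 else 0)"
  define k3 :: int where "k3 = (if u + v \<le> X then 0 else if u + v \<le> X + N then 1 else 2)"
  have "(X-u) mod N = X-u+N*k1" by (rule modk) (use assms in \<open>auto simp: k1_def\<close>)
  moreover have "(X-v) mod N = X-v+N*k2" by (rule modk) (use assms in \<open>auto simp: k2_def\<close>)
  moreover have "(X-u-v) mod N = X-u-v+N*k3" by (rule modk) (use assms in \<open>auto simp: k3_def\<close>)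
  moreover have "0 \<le> k1 \<and> k1 \<le> 1 \<and> 0 \<le> k2 \<and> k2 \<le> 1 \<and> k1 \<le> k3 \<and> k2 \<le> k3 \<and> k3 \<le> 1 + k1 \<and> k3 \<le> 1 + k2"
    using assms by (auto simp: k1_def k2_def k3_def)
  ultimately show ?thesis by blast
qed

lemma wlem:
  fixes N L R w :: int
  assumes "N > 0" "L = R + N*w" "0 \<le> L" "R < N"
  shows "(L = R \<longleftrightarrow> w = 0) \<and> 0 \<le> w"
proof -
  have "0 \<le> w"
  proof (rule ccontr)
    assume "\<not> 0 \<le> w"
    then have "w \<le> -1" by simp
    then have "N*w \<le> N*(-1)" using assms(1) by (intro mult_left_mono) auto
    then show False using assms by simp
  qed
  moreover have "L = R \<longleftrightarrow> w = 0" using assms by simp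
  ultimately show ?thesis by simp
qed

lemma core:
  fixes N X Y Z a a' b b' g g' p q r n t :: int
  assumes N: "N > 0" and XYZ: "0 \<le> X" "X < N" "0 \<le> Y" "Y < N" "0 \<le> Z" "Z < N"
    and rng: "0 \<le> a" "a < N" "0 \<le> a'" "a' < N" "0 \<le> b" "b < N" "0 \<le> b'" "b' < N"
       "0 \<le> g" "g < N" "0 \<le> g'" "g' < N"
    and sums: "a + a' = N + p" "b + b' = N + q" "g + g' = N + r"
    and pqr: "0 \<le> p" "0 \<le> q" "0 \<le> r"
    and n: "n < N" "X + Y + Z = n + N*t"
  shows "\<bar>(if X + Y + Z = n then 1 else 0)
     - (if (X-a) mod N + Y + (Z-a') mod N = n - p then 1 else 0)
     - (if X + (Y-b) mod N + (Z-b') mod N = n - q then 1 else 0)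
     - (if (X-g) mod N + (Y-g') mod N + Z = n - r then 1 else 0)
     + (if (X-a) mod N + (Y-b) mod N + (Z-a'-b') mod N = n - p - q then 1 else 0)
     + (if (X-a-g) mod N + (Y-g') mod N + (Z-a') mod N = n - p - r then 1 else 0)
     + (if (X-g) mod N + (Y-b-g') mod N + (Z-b') mod N = n - q - r then 1 else 0)
     - (if (X-a-g) mod N + (Y-b-g') mod N + (Z-a'-b') mod N = n - p - q - r then 1 else 0)\<bar> \<le> (1::int)"
proof -
  obtain k1 k2 k3 where k: "(X-a) mod N = X-a+N*k1" "(X-g) mod N = X-g+N*k2" "(X-a-g) mod N = X-a-g+N*k3"
    "0 \<le> k1" "k1 \<le> 1" "0 \<le> k2" "k2 \<le> 1" "k1 \<le> k3" "k2 \<le> k3" "k3 \<le> 1 + k1" "k3 \<le> 1 + k2"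
    using wrap[of X N a g] XYZ rng by blast
  obtain l1 l2 l3 where l: "(Y-b) mod N = Y-b+N*l1" "(Y-g') mod N = Y-g'+N*l2" "(Y-b-g') mod N = Y-b-g'+N*l3"
    "0 \<le> l1" "l1 \<le> 1" "0 \<le> l2" "l2 \<le> 1" "l1 \<le> l3" "l2 \<le> l3" "l3 \<le> 1 + l1" "l3 \<le> 1 + l2"
    using wrap[of Y N b g'] XYZ rng by blast
  obtain m1 m2 m3 where m: "(Z-a') mod N = Z-a'+N*m1" "(Z-b') mod N = Z-b'+N*m2" "(Z-a'-b') mod N = Z-a'-b'+N*m3"
    "0 \<le> m1" "m1 \<le> 1" "0 \<le> m2" "m2 \<le> 1" "m1 \<le> m3" "m2 \<le> m3" "m3 \<le> 1 + m1" "m3 \<le> 1 + m2"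
    using wrap[of Z N a' b'] XYZ rng by blast
  have w0: "(X + Y + Z = n \<longleftrightarrow> t = 0) \<and> 0 \<le> t"
    by (rule wlem[OF N]) (use XYZ n in auto)
  have w1: "((X-a) mod N + Y + (Z-a') mod N = n - p \<longleftrightarrow> t - 1 + k1 + m1 = 0) \<and> 0 \<le> t - 1 + k1 + m1"
    by (rule wlem[OF N]) (use XYZ n k m sums pqr in \<open>auto simp: algebra_simps\<close>)
  have w2: "(X + (Y-b) mod N + (Z-b') mod N = n - q \<longleftrightarrow> t - 1 + l1 + m2 = 0) \<and> 0 \<le> t - 1 + l1 + m2"
    by (rule wlem[OF N]) (use XYZ n l m sums pqr in \<open>auto simp: algebra_simps\<close>)
  have w3: "((X-g) mod N + (Y-g') mod N + Z = n - r \<longleftrightarrow> t - 1 + k2 + l2 = 0) \<and> 0 \<le> t - 1 + k2 + l2"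
    by (rule wlem[OF N]) (use XYZ n k l sums pqr in \<open>auto simp: algebra_simps\<close>)
  have w4: "((X-a) mod N + (Y-b) mod N + (Z-a'-b') mod N = n - p - q \<longleftrightarrow> t - 2 + k1 + l1 + m3 = 0) \<and> 0 \<le> t - 2 + k1 + l1 + m3"
    by (rule wlem[OF N]) (use XYZ n k l m sums pqr in \<open>auto simp: algebra_simps\<close>)
  have w5: "((X-a-g) mod N + (Y-g') mod N + (Z-a') mod N = n - p - r \<longleftrightarrow> t - 2 + k3 + l2 + m1 = 0) \<and> 0 \<le> t - 2 + k3 + l2 + m1"
    by (rule wlem[OF N]) (use XYZ n k l m sums pqr in \<open>auto simp: algebra_simps\<close>)
  have w6: "((X-g) mod N + (Y-b-g') mod N + (Z-b') mod N = n - q - r \<longleftrightarrow> t - 2 + k2 + l3 + m2 = 0) \<and> 0 \<le> t - 2 + k2 + l3 + m2"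
    by (rule wlem[OF N]) (use XYZ n k l m sums pqr in \<open>auto simp: algebra_simps\<close>)
  have w7: "((X-a-g) mod N + (Y-b-g') mod N + (Z-a'-b') mod N = n - p - q - r \<longleftrightarrow> t - 3 + k3 + l3 + m3 = 0) \<and> 0 \<le> t - 3 + k3 + l3 + m3"
    by (rule wlem[OF N]) (use XYZ n k l m sums pqr in \<open>auto simp: algebra_simps\<close>)
  have F: "\<bar>(if t = 0 then 1 else 0) - (if t - 1 + k1 + m1 = 0 then 1 else 0)
     - (if t - 1 + l1 + m2 = 0 then 1 else 0) - (if t - 1 + k2 + l2 = 0 then 1 else 0)
     + (if t - 2 + k1 + l1 + m3 = 0 then 1 else 0) + (if t - 2 + k3 + l2 + m1 = 0 then 1 else 0)
     + (if t - 2 + k2 + l3 + m2 = 0 then 1 else 0) - (if t - 3 + k3 + l3 + m3 = 0 then 1 else 0)\<bar> \<le> (1::int)"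
    by (rule fin) (use k l m w0 w1 w2 w3 w4 w5 w6 w7 in auto)
  show ?thesis
    unfolding w0[THEN conjunct1] w1[THEN conjunct1] w2[THEN conjunct1] w3[THEN conjunct1]
        w4[THEN conjunct1] w5[THEN conjunct1] w6[THEN conjunct1] w7[THEN conjunct1] by (rule F)
qed


lemma shift_gen:
  fixes P Q u m s1 s2 s3 e1 e2 e3 :: int
  assumes "Q dvd s3"
  shows "P * (((m - e1*s1 - e2*s2 - e3*s3)*u) mod Q)
       = (P*((m*u) mod Q) - e1*(P*((s1*u) mod Q)) - e2*(P*((s2*u) mod Q))) mod (P*Q)"
proof -
  have md: "\<And>x. Q dvd (x - x mod Q)"
  proof -
    fix x :: int
    have "x - x mod Q = x div Q * Q" by (metis div_mult_mod_eq add_diff_cancel_right')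
    then show "Q dvd (x - x mod Q)" by simp
  qed
  obtain c where c: "s3 = Q*c" using assms by (elim dvdE)
  have "Q dvd ((m - e1*s1 - e2*s2 - e3*s3)*u - ((m*u) mod Q - e1*((s1*u) mod Q) - e2*((s2*u) mod Q)))"
  proof -
    have "(m - e1*s1 - e2*s2 - e3*s3)*u - ((m*u) mod Q - e1*((s1*u) mod Q) - e2*((s2*u) mod Q))
        = (m*u - (m*u) mod Q) - e1*(s1*u - (s1*u) mod Q) - e2*(s2*u - (s2*u) mod Q) - Q*(e3*c*u)"
      by (simp add: c algebra_simps)
    also have "Q dvd \<dots>"
      apply (rule dvd_diff, rule dvd_diff, rule dvd_diff)
         apply (rule md)
        apply (rule dvd_mult, rule md)
       apply (rule dvd_mult, rule md)
      apply simp
      done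
    finally show ?thesis .
  qed
  then have "((m - e1*s1 - e2*s2 - e3*s3)*u) mod Q = ((m*u) mod Q - e1*((s1*u) mod Q) - e2*((s2*u) mod Q)) mod Q"
    by (simp add: mod_eq_dvd_iff)
  then have "P * (((m - e1*s1 - e2*s2 - e3*s3)*u) mod Q)
      = (P * ((m*u) mod Q - e1*((s1*u) mod Q) - e2*((s2*u) mod Q))) mod (P*Q)"
    by (simp add: mod_mult_mult1)
  then show ?thesis by (simp add: algebra_simps)
qed

lemma sum_ind: "x0 < (n::nat) \<Longrightarrow> (\<Sum>x<n. if x = x0 \<and> P then (1::'a::comm_ring_1) else 0) = (if P then 1 else 0)"
  by (cases P) auto

lemma pos_gen:
  fixes P Q s :: nat and u v :: int
  assumes Q: "prime Q" and s: "prime s" "s \<noteq> Q" and b: "int P * u + int Q * v = 1" and sP: "s < P"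
  shows "int s < int P * ((int s * u) mod int Q)"
proof -
  have Q1: "Q > 1" using Q prime_gt_1_nat by blast
  have ne: "(int s * u) mod int Q \<noteq> 0"
  proof
    assume "(int s * u) mod int Q = 0"
    then have "int Q dvd int s * u" by (simp add: mod_eq_0_iff_dvd)
    moreover have "prime (int Q)" using Q by simp
    ultimately have "int Q dvd int s \<or> int Q dvd u" using prime_dvd_mult_iff by blast
    then show False
    proof
      assume "int Q dvd int s"
      then have "Q dvd s" by simp
      then show False using primes_dvd_imp_eq[OF Q s(1)] s(2) by auto
    next
      assume "int Q dvd u"
      then have "int Q dvd int P * u + int Q * v" by simp
      then have "int Q dvd 1" using b by simp
      then show False using Q1 by simp
    qed
  qed
  have "0 \<le> (int s * u) mod int Q" using Q1 by simp
  then have "1 \<le> (int s * u) mod int Q" using ne by simp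
  then have "int P * 1 \<le> int P * ((int s * u) mod int Q)" by (intro mult_left_mono) auto
  moreover have "int s < int P" using sP by simp
  ultimately show ?thesis by linarith
qed

lemma two_sum:
  fixes N s c :: int
  assumes "0 < N" "s mod N = c" "c < s" "s < 2*N"
  shows "s = N + c"
proof -
  define d where "d = s div N"
  have sd: "s = N*d + c" using assms(2) d_def by (metis div_mult_mod_eq mult.commute)
  have "d \<ge> 1"
  proof (rule ccontr)
    assume "\<not> d \<ge> 1"
    then have "d \<le> 0" by simp
    then have "N*d \<le> 0" using assms(1) by (simp add: mult_nonneg_nonpos)
    then show False using sd assms by simp
  qed
  moreover have "d < 2"
  proof (rule ccontr)
    assume "\<not> d < 2"
    then have "N*2 \<le> N*d" using assms(1) by (intro mult_left_mono) auto
    moreover have "0 \<le> c" using assms(1,2) by auto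
    ultimately show False using sd assms by linarith
  qed
  ultimately have "d = 1" by simp
  then show ?thesis using sd by simp
qed

lemma coord_gen:
  fixes P Q i :: nat and u v R :: int
  assumes "int P * u + int Q * v = 1" "i < Q"
  shows "((int P * int i + int Q * R) * u) mod int Q = int i"
proof -
  have "(int P * int i + int Q * R) * u = int i * (int P * u) + int Q * (R * u)" by (simp add: algebra_simps)
  also have "\<dots> = int i + int Q * (R * u - int i * v)"
  proof -
    have h: "int P * u = 1 - int Q * v" using assms(1) by linarith
    show ?thesis unfolding h by (simp add: algebra_simps)
  qed
  finally have "((int P * int i + int Q * R) * u) mod int Q = (int i + int Q * (R * u - int i * v)) mod int Q" by simp
  also have "\<dots> = int i mod int Q" by simp
  also have "\<dots> = int i" using assms(2) by simp
  finally show ?thesis .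
qed

locale tern =
  fixes p q r :: nat and uq vq up vp ur vr :: int
  assumes pp: "prime p" and qp: "prime q" and rp: "prime r"
    and pq: "p \<noteq> q" and pr: "p \<noteq> r" and qr: "q \<noteq> r"
    and bq: "int (p*r) * uq + int q * vq = 1"
    and bp: "int (q*r) * up + int p * vp = 1"
    and br: "int (p*q) * ur + int r * vr = 1"
begin

definition "NN = int (p*q*r)"
definition xx where "xx m = int (p*r) * ((m * uq) mod int q)"
definition yy where "yy m = int (q*r) * ((m * up) mod int p)"
definition zz where "zz m = int (p*q) * ((m * ur) mod int r)"

lemma gt1: "p > 1" "q > 1" "r > 1" using pp qp rp prime_gt_1_nat by auto

lemma xx_range: "0 \<le> xx m \<and> xx m < NN"
proof -
  have "(m * uq) mod int q < int q" "0 \<le> (m * uq) mod int q" using gt1 by auto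
  then have "int (p*r) * ((m * uq) mod int q) < int (p*r) * int q"
    using gt1 by (intro mult_strict_left_mono) auto
  then show ?thesis using gt1 \<open>0 \<le> (m * uq) mod int q\<close> unfolding xx_def NN_def by (simp add: ac_simps)
qed

lemma yy_range: "0 \<le> yy m \<and> yy m < NN"
proof -
  have "(m * up) mod int p < int p" "0 \<le> (m * up) mod int p" using gt1 by auto
  then have "int (q*r) * ((m * up) mod int p) < int (q*r) * int p"
    using gt1 by (intro mult_strict_left_mono) auto
  then show ?thesis using gt1 \<open>0 \<le> (m * up) mod int p\<close> unfolding yy_def NN_def by (simp add: ac_simps)
qed

lemma zz_range: "0 \<le> zz m \<and> zz m < NN"
proof -
  have "(m * ur) mod int r < int r" "0 \<le> (m * ur) mod int r" using gt1 by auto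
  then have "int (p*q) * ((m * ur) mod int r) < int (p*q) * int r"
    using gt1 by (intro mult_strict_left_mono) auto
  then show ?thesis using gt1 \<open>0 \<le> (m * ur) mod int r\<close> unfolding zz_def NN_def by (simp add: ac_simps)
qed

lemma xx_shift: "xx (m - e1*int p - e2*int q - e3*int r) = (xx m - e1 * xx (int p) - e3 * xx (int r)) mod NN"
proof -
  have "xx (m - e1*int p - e2*int q - e3*int r) = xx (m - e1*int p - e3*int r - e2*int q)"
    by (simp add: algebra_simps)
  also have "\<dots> = (xx m - e1 * xx (int p) - e3 * xx (int r)) mod (int (p*r) * int q)"
    unfolding xx_def by (rule shift_gen) simp
  also have "int (p*r) * int q = NN" unfolding NN_def by (simp add: ac_simps)
  finally show ?thesis .
qed

lemma yy_shift: "yy (m - e1*int p - e2*int q - e3*int r) = (yy m - e2 * yy (int q) - e3 * yy (int r)) mod NN"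
proof -
  have "yy (m - e1*int p - e2*int q - e3*int r) = yy (m - e2*int q - e3*int r - e1*int p)"
    by (simp add: algebra_simps)
  also have "\<dots> = (yy m - e2 * yy (int q) - e3 * yy (int r)) mod (int (q*r) * int p)"
    unfolding yy_def by (rule shift_gen) simp
  also have "int (q*r) * int p = NN" unfolding NN_def by (simp add: ac_simps)
  finally show ?thesis .
qed

lemma zz_shift: "zz (m - e1*int p - e2*int q - e3*int r) = (zz m - e1 * zz (int p) - e2 * zz (int q)) mod NN"
proof -
  have "zz (m - e1*int p - e2*int q - e3*int r) = (zz m - e1 * zz (int p) - e2 * zz (int q)) mod (int (p*q) * int r)"
    unfolding zz_def by (rule shift_gen) simp
  also have "int (p*q) * int r = NN" unfolding NN_def by (simp add: ac_simps)
  finally show ?thesis .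
qed

lemma xx_q: "xx (int q) = 0" by (simp add: xx_def)
lemma yy_p: "yy (int p) = 0" by (simp add: yy_def)
lemma zz_r: "zz (int r) = 0" by (simp add: zz_def)

lemma coprimes: "coprime (int p) (int q)" "coprime (int p) (int r)" "coprime (int q) (int r)"
  using primes_coprime[OF pp qp pq] primes_coprime[OF pp rp pr] primes_coprime[OF qp rp qr] by auto

lemma NN_dvd:
  assumes "int p dvd x" "int q dvd x" "int r dvd x" shows "NN dvd x"
proof -
  have h1: "int p * int q dvd x" by (rule divides_mult[OF assms(1) assms(2) coprimes(1)])
  have h2: "coprime (int p * int q) (int r)" by (metis coprime_mult_left_iff coprimes(2) coprimes(3))
  have "int p * int q * int r dvd x" by (rule divides_mult[OF h1 assms(3) h2])
  then show ?thesis by (simp add: NN_def)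
qed

lemma modeq: "x mod (Q::int) = x - Q * (x div Q)"
  by (metis minus_div_mult_eq_mod mult.commute)

lemma sum_cong: "(xx m + yy m + zz m) mod NN = m mod NN"
proof -
  define a where "a = (m * uq) div int q"
  define b where "b = (m * up) div int p"
  define c where "c = (m * ur) div int r"
  have X: "xx m = m - int q * (m*vq + int (p*r) * a)"
  proof -
    have "xx m = int (p*r) * (m*uq - int q * a)" unfolding xx_def a_def by (simp add: modeq)
    also have "\<dots> = m * (int (p*r) * uq) - int q * (int (p*r) * a)" by (simp add: algebra_simps)
    also have "int (p*r) * uq = 1 - int q * vq" using bq by simp
    finally show ?thesis by (simp add: algebra_simps)
  qed
  have Y: "yy m = m - int p * (m*vp + int (q*r) * b)"
  proof -
    have "yy m = int (q*r) * (m*up - int p * b)" unfolding yy_def b_def by (simp add: modeq)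
    also have "\<dots> = m * (int (q*r) * up) - int p * (int (q*r) * b)" by (simp add: algebra_simps)
    also have "int (q*r) * up = 1 - int p * vp" using bp by simp
    finally show ?thesis by (simp add: algebra_simps)
  qed
  have Z: "zz m = m - int r * (m*vr + int (p*q) * c)"
  proof -
    have "zz m = int (p*q) * (m*ur - int r * c)" unfolding zz_def c_def by (simp add: modeq)
    also have "\<dots> = m * (int (p*q) * ur) - int r * (int (p*q) * c)" by (simp add: algebra_simps)
    also have "int (p*q) * ur = 1 - int r * vr" using br by simp
    finally show ?thesis by (simp add: algebra_simps)
  qed
  have "int p dvd xx m + yy m + zz m - m"
  proof -
    have "xx m + yy m + zz m - m = int p * (int r * ((m * uq) mod int q) - (m*vp + int (q*r) * b) + int q * ((m * ur) mod int r))"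
      unfolding xx_def zz_def using Y by (simp add: algebra_simps)
    then show ?thesis by simp
  qed
  moreover have "int q dvd xx m + yy m + zz m - m"
  proof -
    have "xx m + yy m + zz m - m = int q * (- (m*vq + int (p*r) * a) + int r * ((m * up) mod int p) + int p * ((m * ur) mod int r))"
      unfolding yy_def zz_def using X by (simp add: algebra_simps)
    then show ?thesis by simp
  qed
  moreover have "int r dvd xx m + yy m + zz m - m"
  proof -
    have "xx m + yy m + zz m - m = int r * (int p * ((m * uq) mod int q) + int q * ((m * up) mod int p) - (m*vr + int (p*q) * c))"
      unfolding xx_def yy_def using Z by (simp add: algebra_simps)
    then show ?thesis by simp
  qed
  ultimately have "NN dvd xx m + yy m + zz m - m" by (rule NN_dvd)
  then show ?thesis by (simp add: mod_eq_dvd_iff)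
qed

lemma NN_gt: "int p < NN" "int q < NN" "int r < NN" "0 < NN"
proof -
  have "1 < q * r" by (rule less_1_mult) (use gt1 in auto)
  moreover have "1 < p * r" by (rule less_1_mult) (use gt1 in auto)
  moreover have "1 < p * q" by (rule less_1_mult) (use gt1 in auto)
  ultimately have "p * 1 < p * (q * r)" "q * 1 < q * (p * r)" "r * 1 < r * (p * q)" using gt1
    by (meson mult_less_mono2 less_trans zero_less_one)+
  then have "p < p*q*r" "q < p*q*r" "r < p*q*r" by (simp_all add: ac_simps)
  then show "int p < NN" "int q < NN" "int r < NN" "0 < NN" unfolding NN_def by (simp_all only: of_nat_less_iff)
qed

lemma pos6: "int p < xx (int p)" "int p < zz (int p)" "int q < yy (int q)" "int q < zz (int q)"
  "int r < xx (int r)" "int r < yy (int r)"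
  unfolding xx_def yy_def zz_def
  using pos_gen[OF qp pp pq bq] pos_gen[OF rp pp pr br] pos_gen[OF pp qp pq[symmetric] bp]
     pos_gen[OF rp qp qr br] pos_gen[OF qp rp qr[symmetric] bq] pos_gen[OF pp rp pr[symmetric] bp] gt1
  by auto

lemma sums3: "xx (int p) + zz (int p) = NN + int p" "yy (int q) + zz (int q) = NN + int q"
  "xx (int r) + yy (int r) = NN + int r"
proof -
  show "xx (int p) + zz (int p) = NN + int p"
    using two_sum[of NN "xx (int p) + zz (int p)" "int p"] sum_cong[of "int p"] yy_p NN_gt pos6
      xx_range[of "int p"] zz_range[of "int p"] by simp
  show "yy (int q) + zz (int q) = NN + int q"
    using two_sum[of NN "yy (int q) + zz (int q)" "int q"] sum_cong[of "int q"] xx_q NN_gt pos6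
      yy_range[of "int q"] zz_range[of "int q"] by (simp add: add.commute)
  show "xx (int r) + yy (int r) = NN + int r"
    using two_sum[of NN "xx (int r) + yy (int r)" "int r"] sum_cong[of "int r"] zz_r NN_gt pos6
      xx_range[of "int r"] yy_range[of "int r"] by simp
qed


lemma memb:
  "(\<Sum>k<r. \<Sum>j<p. \<Sum>i<q. if p*r*i + q*r*j + p*q*k = m' then (1::complex) else 0)
    = (if xx (int m') + yy (int m') + zz (int m') = int m' then 1 else 0)"
proof -
  define m where "m = int m'"
  define S where "S = (xx m + yy m + zz m = m)"
  define i0 where "i0 = nat ((m * uq) mod int q)"
  define j0 where "j0 = nat ((m * up) mod int p)"
  define k0 where "k0 = nat ((m * ur) mod int r)"
  have i0: "i0 < q" "int i0 = (m * uq) mod int q" using gt1 unfolding i0_def by (auto simp: nat_less_iff)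
  have j0: "j0 < p" "int j0 = (m * up) mod int p" using gt1 unfolding j0_def by (auto simp: nat_less_iff)
  have k0: "k0 < r" "int k0 = (m * ur) mod int r" using gt1 unfolding k0_def by (auto simp: nat_less_iff)
  have key: "(p*r*i + q*r*j + p*q*k = m') = (i = i0 \<and> j = j0 \<and> k = k0 \<and> S)"
    if ijk: "i < q" "j < p" "k < r" for i j k
  proof
    assume E: "p*r*i + q*r*j + p*q*k = m'"
    then have "int m' = int (p*r*i + q*r*j + p*q*k)" by simp
    then have E': "m = int (p*r) * int i + int (q*r) * int j + int (p*q) * int k" unfolding m_def
      by (simp only: of_nat_add of_nat_mult)
    have "m = int (p*r) * int i + int q * (int r * int j + int p * int k)" using E' by (simp add: algebra_simps)
    then have "(m * uq) mod int q = int i" using coord_gen[OF bq ijk(1)] by simp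
    then have ii: "i = i0" using i0 by simp
    have "m = int (q*r) * int j + int p * (int r * int i + int q * int k)" using E' by (simp add: algebra_simps)
    then have "(m * up) mod int p = int j" using coord_gen[OF bp ijk(2)] by simp
    then have jj: "j = j0" using j0 by simp
    have "m = int (p*q) * int k + int r * (int p * int i + int q * int j)" using E' by (simp add: algebra_simps)
    then have "(m * ur) mod int r = int k" using coord_gen[OF br ijk(3)] by simp
    then have kk: "k = k0" using k0 by simp
    have "xx m = int (p*r) * int i" "yy m = int (q*r) * int j" "zz m = int (p*q) * int k"
      unfolding xx_def yy_def zz_def using ii jj kk i0 j0 k0 by auto
    then have S using E' unfolding S_def by simp
    then show "i = i0 \<and> j = j0 \<and> k = k0 \<and> S" using ii jj kk by simp
  next
    assume "i = i0 \<and> j = j0 \<and> k = k0 \<and> S"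
    then have h: "i = i0" "j = j0" "k = k0" S by auto
    have "xx m = int (p*r) * int i" "yy m = int (q*r) * int j" "zz m = int (p*q) * int k"
      unfolding xx_def yy_def zz_def using h i0 j0 k0 by auto
    then have "int (p*r*i + q*r*j + p*q*k) = m" using h(4) unfolding S_def by simp
    then show "p*r*i + q*r*j + p*q*k = m'" unfolding m_def by (simp only: of_nat_eq_iff)
  qed
  have inner: "(\<Sum>i<q. if p*r*i + q*r*j + p*q*k = m' then (1::complex) else 0) = (if j = j0 \<and> k = k0 \<and> S then 1 else 0)"
    if "j < p" "k < r" for j k
  proof -
    have "(\<Sum>i<q. if p*r*i + q*r*j + p*q*k = m' then (1::complex) else 0)
        = (\<Sum>i<q. if i = i0 \<and> (j = j0 \<and> k = k0 \<and> S) then (1::complex) else 0)"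
    proof (rule sum.cong[OF refl])
      fix i assume "i \<in> {..<q}"
      then have "i < q" by simp
      show "(if p*r*i + q*r*j + p*q*k = m' then (1::complex) else 0) = (if i = i0 \<and> (j = j0 \<and> k = k0 \<and> S) then 1 else 0)"
        by (simp only: key[OF \<open>i < q\<close> that])
    qed
    also have "\<dots> = (if j = j0 \<and> k = k0 \<and> S then 1 else 0)" by (rule sum_ind[OF i0(1)])
    finally show ?thesis .
  qed
  have middle: "(\<Sum>j<p. \<Sum>i<q. if p*r*i + q*r*j + p*q*k = m' then (1::complex) else 0) = (if k = k0 \<and> S then 1 else 0)"
    if "k < r" for k
  proof -
    have "(\<Sum>j<p. \<Sum>i<q. if p*r*i + q*r*j + p*q*k = m' then (1::complex) else 0)
        = (\<Sum>j<p. if j = j0 \<and> (k = k0 \<and> S) then (1::complex) else 0)"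
    proof (rule sum.cong[OF refl])
      fix j assume "j \<in> {..<p}"
      then have "j < p" by simp
      show "(\<Sum>i<q. if p*r*i + q*r*j + p*q*k = m' then (1::complex) else 0) = (if j = j0 \<and> (k = k0 \<and> S) then 1 else 0)"
        by (simp only: inner[OF \<open>j < p\<close> that])
    qed
    also have "\<dots> = (if k = k0 \<and> S then 1 else 0)" by (rule sum_ind[OF j0(1)])
    finally show ?thesis .
  qed
  have "(\<Sum>k<r. \<Sum>j<p. \<Sum>i<q. if p*r*i + q*r*j + p*q*k = m' then (1::complex) else 0)
      = (\<Sum>k<r. if k = k0 \<and> S then (1::complex) else 0)"
  proof (rule sum.cong[OF refl])
    fix k assume "k \<in> {..<r}"
    then have "k < r" by simp
    show "(\<Sum>j<p. \<Sum>i<q. if p*r*i + q*r*j + p*q*k = m' then (1::complex) else 0) = (if k = k0 \<and> S then 1 else 0)"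
      by (simp only: middle[OF \<open>k < r\<close>])
  qed
  also have "\<dots> = (if S then 1 else 0)" by (rule sum_ind[OF k0(1)])
  finally show ?thesis unfolding S_def m_def .
qed

definition II :: "int \<Rightarrow> int" where "II m = (if xx m + yy m + zz m = m then 1 else 0)"

lemma main_int:
  assumes n: "0 \<le> n" "n < NN"
  shows "\<bar>II n - II (n - int p) - II (n - int q) - II (n - int r) + II (n - int p - int q)
     + II (n - int p - int r) + II (n - int q - int r) - II (n - int p - int q - int r)\<bar> \<le> 1"
proof -
  define X where "X = xx n"
  define Y where "Y = yy n"
  define Z where "Z = zz n"
  have XYZ: "0 \<le> X" "X < NN" "0 \<le> Y" "Y < NN" "0 \<le> Z" "Z < NN"
    unfolding X_def Y_def Z_def using xx_range yy_range zz_range by auto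
  have modX: "X mod NN = X" "Y mod NN = Y" "Z mod NN = Z" using XYZ by auto
  have sx: "xx (n - e1*int p - e2*int q - e3*int r) = (X - e1 * xx (int p) - e3 * xx (int r)) mod NN"
    "yy (n - e1*int p - e2*int q - e3*int r) = (Y - e2 * yy (int q) - e3 * yy (int r)) mod NN"
    "zz (n - e1*int p - e2*int q - e3*int r) = (Z - e1 * zz (int p) - e2 * zz (int q)) mod NN" for e1 e2 e3
    unfolding X_def Y_def Z_def using xx_shift yy_shift zz_shift by auto
  have "(X + Y + Z) mod NN = n mod NN" unfolding X_def Y_def Z_def by (rule sum_cong)
  also have "\<dots> = n" using n by simp
  finally have "NN dvd X + Y + Z - n" by (metis mod_eq_dvd_iff mod_mod_trivial)
  then obtain t where t: "X + Y + Z - n = NN * t" by (elim dvdE)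
  have C: "\<bar>(if X + Y + Z = n then 1 else 0)
     - (if (X - xx (int p)) mod NN + Y + (Z - zz (int p)) mod NN = n - int p then 1 else 0)
     - (if X + (Y - yy (int q)) mod NN + (Z - zz (int q)) mod NN = n - int q then 1 else 0)
     - (if (X - xx (int r)) mod NN + (Y - yy (int r)) mod NN + Z = n - int r then 1 else 0)
     + (if (X - xx (int p)) mod NN + (Y - yy (int q)) mod NN + (Z - zz (int p) - zz (int q)) mod NN = n - int p - int q then 1 else 0)
     + (if (X - xx (int p) - xx (int r)) mod NN + (Y - yy (int r)) mod NN + (Z - zz (int p)) mod NN = n - int p - int r then 1 else 0)
     + (if (X - xx (int r)) mod NN + (Y - yy (int q) - yy (int r)) mod NN + (Z - zz (int q)) mod NN = n - int q - int r then 1 else 0)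
     - (if (X - xx (int p) - xx (int r)) mod NN + (Y - yy (int q) - yy (int r)) mod NN + (Z - zz (int p) - zz (int q)) mod NN = n - int p - int q - int r then 1 else 0)\<bar> \<le> (1::int)"
    by (rule core[of NN X Y Z "xx (int p)" "zz (int p)" "yy (int q)" "zz (int q)" "xx (int r)" "yy (int r)"
          "int p" "int q" "int r" n t])
      (use XYZ NN_gt xx_range yy_range zz_range sums3 n t in \<open>auto simp: algebra_simps\<close>)
  have I0: "II n = (if X + Y + Z = n then 1 else 0)" unfolding II_def X_def Y_def Z_def ..
  have I1: "II (n - int p) = (if (X - xx (int p)) mod NN + Y + (Z - zz (int p)) mod NN = n - int p then 1 else 0)"
    using sx[of 1 0 0] modX unfolding II_def by simp
  have I2: "II (n - int q) = (if X + (Y - yy (int q)) mod NN + (Z - zz (int q)) mod NN = n - int q then 1 else 0)"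
    using sx[of 0 1 0] modX unfolding II_def by simp
  have I3: "II (n - int r) = (if (X - xx (int r)) mod NN + (Y - yy (int r)) mod NN + Z = n - int r then 1 else 0)"
    using sx[of 0 0 1] modX unfolding II_def by simp
  have I4: "II (n - int p - int q) = (if (X - xx (int p)) mod NN + (Y - yy (int q)) mod NN + (Z - zz (int p) - zz (int q)) mod NN = n - int p - int q then 1 else 0)"
    using sx[of 1 1 0] modX unfolding II_def by simp
  have I5: "II (n - int p - int r) = (if (X - xx (int p) - xx (int r)) mod NN + (Y - yy (int r)) mod NN + (Z - zz (int p)) mod NN = n - int p - int r then 1 else 0)"
    using sx[of 1 0 1] modX unfolding II_def by simp
  have I6: "II (n - int q - int r) = (if (X - xx (int r)) mod NN + (Y - yy (int q) - yy (int r)) mod NN + (Z - zz (int q)) mod NN = n - int q - int r then 1 else 0)"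
    using sx[of 0 1 1] modX unfolding II_def by simp
  have I7: "II (n - int p - int q - int r) = (if (X - xx (int p) - xx (int r)) mod NN + (Y - yy (int q) - yy (int r)) mod NN + (Z - zz (int p) - zz (int q)) mod NN = n - int p - int q - int r then 1 else 0)"
    using sx[of 1 1 1] modX unfolding II_def by simp
  show ?thesis unfolding I0 I1 I2 I3 I4 I5 I6 I7 by (rule C)
qed

end


lemma (in tern) II_neg: "m < 0 \<Longrightarrow> II m = 0"
  using xx_range[of m] yy_range[of m] zz_range[of m] unfolding II_def by auto

lemma (in tern) coeff_G3:
  "coeff (GS (p*r) q * GS (q*r) p * GS (p*q) r) k = of_int (II (int k))"
  unfolding GS3_coeff memb II_def by simp

lemma (in tern) coeff_shift:
  "coeff (monom 1 s * (GS (p*r) q * GS (q*r) p * GS (p*q) r)) k = of_int (II (int k - int s))"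
proof (cases "k < s")
  case True
  then show ?thesis using II_neg[of "int k - int s"] by (simp add: coeff_monom_mult)
next
  case False
  then have "int (k - s) = int k - int s" by simp
  then show ?thesis using False by (simp add: coeff_monom_mult coeff_G3)
qed

lemma degree_cyc:
  assumes "prime p" "p < N" "p dvd N"
  shows "degree (cyclotomic_poly N) \<le> N - 2"
proof -
  let ?S = "{k. 0 < k \<and> k < N \<and> coprime k N}"
  have sub: "?S \<subseteq> {1..<N} - {p}"
    using assms by (auto simp: prime_imp_coprime coprime_commute)
  have fin: "finite ?S" by simp
  have "degree (cyclotomic_poly N) \<le> (\<Sum>k\<in>?S. degree [:- (cis (2 * pi / real N) ^ k), (1::complex):])"
    unfolding cyclotomic_poly_def
    using degree_prod_sum_le[OF fin, of "\<lambda>k. [:- (cis (2 * pi / real N) ^ k), (1::complex):]"] by (simp add: o_def)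
  also have "\<dots> = card ?S" by simp
  also have "\<dots> \<le> card ({1..<N} - {p})" by (rule card_mono) (use sub in auto)
  also have "\<dots> = N - 2" using assms prime_gt_0_nat[OF assms(1)] by simp
  finally show ?thesis .
qed

theorem theorem3:
  fixes p q r :: nat and n :: int
  assumes "prime p" "prime q" "prime r"
    and "q \<noteq> r" and "p < q" and "p < r"
  shows "cmod (cyc_coeff (p * q * r) n - cyc_coeff (p * q * r) (n - 1)) \<le> 1"
proof -
  note pp = assms(1) and qp = assms(2) and rp = assms(3) and qr = assms(4)
  have pq: "p \<noteq> q" and pr: "p \<noteq> r" using assms by auto
  define N where "N = p * q * r"
  have cop1: "coprime (int (p*r)) (int q)" using primes_coprime[OF qp pp] primes_coprime[OF qp rp qr] pq
    by (simp add: coprime_commute)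
  have cop2: "coprime (int (q*r)) (int p)" using primes_coprime[OF pp qp pq] primes_coprime[OF pp rp pr]
    by (simp add: coprime_commute)
  have cop3: "coprime (int (p*q)) (int r)" using primes_coprime[OF rp pp] primes_coprime[OF rp qp] pr qr
    by (simp add: coprime_commute)
  obtain uq vq where b1: "uq * int (p*r) + vq * int q = 1"
    using bezout_int[of "int (p*r)" "int q"] cop1 by (auto simp: coprime_iff_gcd_eq_1)
  obtain up vp where b2: "up * int (q*r) + vp * int p = 1"
    using bezout_int[of "int (q*r)" "int p"] cop2 by (auto simp: coprime_iff_gcd_eq_1)
  obtain ur vr where b3: "ur * int (p*q) + vr * int r = 1"
    using bezout_int[of "int (p*q)" "int r"] cop3 by (auto simp: coprime_iff_gcd_eq_1)
  interpret T: tern p q r uq vq up vp ur vr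
    by unfold_locales (use pp qp rp pq pr qr b1 b2 b3 in \<open>auto simp: ac_simps\<close>)
  have gt: "p > 1" "q > 1" "r > 1" using T.gt1 by auto
  have NNN: "T.NN = int N" unfolding T.NN_def N_def ..
  have pN: "p < N" using T.NN_gt(1) NNN by simp
  have N1: "N > 1" using pN gt by simp
  have Phi_N: "cyclotomic_poly N = Phi N" using Phi_eq[OF N1] .
  have degN: "degree (cyclotomic_poly N) \<le> N - 2"
    by (rule degree_cyc[OF pp pN]) (simp add: N_def)
  show ?thesis
  proof (cases "n < 0")
    case True
    then show ?thesis by (simp add: cyc_coeff_def N_def[symmetric])
  next
    case False
    show ?thesis
    proof (cases "n < int N")
      case False2: False
      then have "coeff (cyclotomic_poly N) (nat n) = 0" "coeff (cyclotomic_poly N) (nat (n - 1)) = 0"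
        using degN N1 by (auto intro!: coeff_eq_0)
      then show ?thesis using \<open>\<not> n < 0\<close> by (simp add: cyc_coeff_def N_def[symmetric])
    next
      case True
      define k where "k = nat n"
      have nk: "n = int k" using False k_def by simp
      let ?G = "GS (p*r) q * GS (q*r) p * GS (p*q) r"
      let ?E = "PP 1 * Phi N"
      have diff: "cyc_coeff N n - cyc_coeff N (n - 1) = - coeff ?E k"
      proof -
        have "?E = pCons 0 (Phi N) - Phi N" by (simp add: PP_def monom_Suc algebra_simps)
        then have "coeff ?E k = (if k = 0 then 0 else coeff (Phi N) (k - 1)) - coeff (Phi N) k"
          by (cases k) auto
        moreover have "\<And>m::nat. nat (1 + int m) = Suc m" by (simp add: nat_add_distrib)
        ultimately show ?thesis unfolding cyc_coeff_def Phi_N nk by (cases k) (auto simp: nat_diff_distrib)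
      qed
      have "coeff ?E k = coeff (?E * PP N * PP N) k" using True nk by (simp add: coeff_trunc)
      also have "\<dots> = coeff (PP p * PP q * PP r * ?G) k"
        using key_poly[OF pp qp rp pq pr qr] unfolding N_def by simp
      also have "\<dots> = coeff (monom 1 (p+q+r) * ?G) k - coeff (monom 1 (p+q) * ?G) k
          - coeff (monom 1 (p+r) * ?G) k - coeff (monom 1 (q+r) * ?G) k + coeff (monom 1 p * ?G) k
          + coeff (monom 1 q * ?G) k + coeff (monom 1 r * ?G) k - coeff ?G k"
        unfolding PPP_expand by (simp add: algebra_simps)
      also have "\<dots> = of_int (T.II (n - int p - int q - int r) - T.II (n - int p - int q)
          - T.II (n - int p - int r) - T.II (n - int q - int r) + T.II (n - int p) + T.II (n - int q)
          + T.II (n - int r) - T.II n)"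
        unfolding T.coeff_shift T.coeff_G3 nk by (simp add: algebra_simps)
      finally have cE: "coeff ?E k = \<dots>" .
      have M: "\<bar>T.II n - T.II (n - int p) - T.II (n - int q) - T.II (n - int r) + T.II (n - int p - int q)
        + T.II (n - int p - int r) + T.II (n - int q - int r) - T.II (n - int p - int q - int r)\<bar> \<le> 1"
        using T.main_int[of n] False True NNN by simp
      have "cmod (cyc_coeff N n - cyc_coeff N (n - 1)) = \<bar>T.II n - T.II (n - int p) - T.II (n - int q) - T.II (n - int r) + T.II (n - int p - int q)
        + T.II (n - int p - int r) + T.II (n - int q - int r) - T.II (n - int p - int q - int r)\<bar>"
        unfolding diff cE by (simp only: norm_minus_cancel norm_of_int)
      then show ?thesis using M unfolding N_def by simp
    qed
  qed
qed

end
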